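(* Let $G$ be a finite simple graph with at least one edge, and let $\lambda_1$ be the smallest non-zero eigenvalue of its Kirchhoff matrix $K$. Then $\lambda_1\geq 1/(\tau(G)-1)$.
   Context: $K=D-A$ is the Kirchhoff matrix (degree matrix minus adjacency matrix) of $G$. The tree-forest ratio is $\tau(G)={\rm det}(1+K)/{\rm Det}(K)=\prod_{\lambda\neq0}(1+1/\lambda)$, the product over the non-zero eigenvalues of $K$ with multiplicity (${\rm Det}$ denotes the pseudo-determinant, the product of the non-zero eigenvalues). *)

theory Defs
  imports "Jordan_Normal_Form.Char_Poly" "HOL-Computational_Algebra.Polynomial"
begin

definition simple_graph :: "nat \<Rightarrow> (nat \<Rightarrow> nat \<Rightarrow> bool) \<Rightarrow> bool" where
  "simple_graph n E \<longleftrightarrow> (\<forall>i<n. \<not> E i i) \<and> (\<forall>i<n. \<forall>j<n. E i j \<longrightarrow> E j i)"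

definition has_edge :: "nat \<Rightarrow> (nat \<Rightarrow> nat \<Rightarrow> bool) \<Rightarrow> bool" where
  "has_edge n E \<longleftrightarrow> (\<exists>i<n. \<exists>j<n. E i j)"

definition vdegree :: "nat \<Rightarrow> (nat \<Rightarrow> nat \<Rightarrow> bool) \<Rightarrow> nat \<Rightarrow> nat" where
  "vdegree n E i = card {j. j < n \<and> E i j}"

definition kirchhoff :: "nat \<Rightarrow> (nat \<Rightarrow> nat \<Rightarrow> bool) \<Rightarrow> real mat" where
  "kirchhoff n E = mat n n (\<lambda>(i,j). (if i = j then real (vdegree n E i) else 0)
                                     - (if E i j then 1 else 0))"

definition eigenvalues_mset :: "real mat \<Rightarrow> real multiset" where
  "eigenvalues_mset A = proots (char_poly A)"

definition pdet :: "real mat \<Rightarrow> real" where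
  "pdet A = prod_mset (filter_mset (\<lambda>x. x \<noteq> 0) (eigenvalues_mset A))"

definition tree_forest_ratio :: "nat \<Rightarrow> (nat \<Rightarrow> nat \<Rightarrow> bool) \<Rightarrow> real" where
  "tree_forest_ratio n E =
     det (1\<^sub>m n + kirchhoff n E) / pdet (kirchhoff n E)"

definition min_nonzero_eigenvalue :: "real mat \<Rightarrow> real" where
  "min_nonzero_eigenvalue A = Min {x. eigenvalue A x \<and> x \<noteq> 0}"

end

theory Submission imports Defs "Jordan_Normal_Form.Schur_Decomposition" begin

lemma kirchhoff_carrier[simp]: "kirchhoff n E \<in> carrier_mat n n"
  by (simp add: kirchhoff_def)

lemma kirchhoff_dim[simp]: "dim_row (kirchhoff n E) = n" "dim_col (kirchhoff n E) = n"
  by (simp_all add: kirchhoff_def)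

lemma kirchhoff_index[simp]: "i < n \<Longrightarrow> j < n \<Longrightarrow> kirchhoff n E $$ (i,j) =
   (if i = j then real (vdegree n E i) else 0) - (if E i j then 1 else 0)"
  by (simp add: kirchhoff_def)

lemma cnj_mult_self: "cnj z * z = complex_of_real ((cmod z)^2)"
  by (metis complex_norm_square mult.commute)

lemma ev_real_nonneg:
  assumes sg: "simple_graph n E"
    and ev: "eigenvalue (map_mat complex_of_real (kirchhoff n E)) a"
  shows "\<exists>b\<ge>0. a = complex_of_real b"
proof -
  let ?K = "map_mat complex_of_real (kirchhoff n E)"
  have Kc: "?K \<in> carrier_mat n n" by simp
  from ev obtain v where v: "v \<in> carrier_vec n" "v \<noteq> 0\<^sub>v n" "?K *\<^sub>v v = a \<cdot>\<^sub>v v"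
    unfolding eigenvalue_def eigenvector_def using Kc by auto
  define w where "w i = v $ i" for i
  have sym: "\<And>i j. i < n \<Longrightarrow> j < n \<Longrightarrow> E i j = E j i"
    using sg unfolding simple_graph_def by blast
  have row: "a * w i = (\<Sum>j<n. if E i j then w i - w j else 0)" if i: "i < n" for i
  proof -
    have "a * w i = (?K *\<^sub>v v) $ i" using v(1) v(3) i by (simp add: w_def)
    also have "\<dots> = (\<Sum>j<n. ?K $$ (i,j) * w j)"
      using v(1) i by (simp add: scalar_prod_def w_def atLeast0LessThan)
    also have "\<dots> = (\<Sum>j<n. (if i = j then of_nat (vdegree n E i) * w i else 0)
                         - (if E i j then w j else 0))"
      by (rule sum.cong) (use i in \<open>auto simp: kirchhoff_def algebra_simps\<close>)
    also have "\<dots> = of_nat (vdegree n E i) * w i - (\<Sum>j<n. if E i j then w j else 0)"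
      using i by (simp add: sum_subtractf)
    also have "(\<Sum>j<n. if E i j then w i else 0) = of_nat (vdegree n E i) * w i"
      by (simp add: sum.If_cases vdegree_def Int_def conj_commute)
    moreover have "(\<Sum>j<n. if E i j then w i - w j else 0) =
       (\<Sum>j<n. if E i j then w i else 0) - (\<Sum>j<n. if E i j then w j else 0)"
      by (auto simp add: sum_subtractf[symmetric] intro!: sum.cong)
    ultimately show ?thesis by simp
  qed
  define Q where "Q = (\<Sum>i<n. \<Sum>j<n. if E i j then cnj (w i) * (w i - w j) else 0)"
  define S where "S = (\<Sum>i<n. cnj (w i) * w i)"
  have aS: "a * S = Q"
  proof -
    have "a * S = (\<Sum>i<n. cnj (w i) * (a * w i))"
      by (simp add: S_def sum_distrib_left algebra_simps)
    also have "\<dots> = (\<Sum>i<n. cnj (w i) * (\<Sum>j<n. if E i j then w i - w j else 0))"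
      by (rule sum.cong) (auto simp: row)
    also have "\<dots> = Q" unfolding Q_def
      by (rule sum.cong) (auto simp: sum_distrib_left if_distrib cong: if_cong)
    finally show ?thesis .
  qed
  define Q' where "Q' = (\<Sum>i<n. \<Sum>j<n. if E i j then cnj (w j) * (w j - w i) else 0)"
  have QQ': "Q' = Q"
  proof -
    have "Q' = (\<Sum>j<n. \<Sum>i<n. if E i j then cnj (w j) * (w j - w i) else 0)"
      unfolding Q'_def by (rule sum.swap)
    also have "\<dots> = Q" unfolding Q_def
      by (intro sum.cong refl) (auto simp: sym)
    finally show ?thesis .
  qed
  define R where "R = (\<Sum>i<n. \<Sum>j<n. if E i j then (cmod (w i - w j))^2 else 0)"
  have R0: "R \<ge> 0" unfolding R_def by (intro sum_nonneg) auto
  have QR: "2 * Q = complex_of_real R"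
  proof -
    have "2 * Q = Q + Q'" using QQ' by simp
    also have "\<dots> = (\<Sum>i<n. \<Sum>j<n. if E i j then cnj (w i - w j) * (w i - w j) else 0)"
      unfolding Q_def Q'_def sum.distrib[symmetric]
      by (intro sum.cong refl) (auto simp: algebra_simps)
    also have "\<dots> = complex_of_real R" unfolding R_def of_real_sum
      by (intro sum.cong refl) (simp only: cnj_mult_self of_real_0 if_distrib[of complex_of_real])
    finally show ?thesis .
  qed
  define s where "s = (\<Sum>i<n. (cmod (w i))^2)"
  have Ss: "S = complex_of_real s" unfolding S_def s_def of_real_sum
    by (intro sum.cong refl) (simp only: cnj_mult_self of_real_0 if_distrib[of complex_of_real])
  from v(1,2) obtain i where i: "i < n" "w i \<noteq> 0" unfolding w_def by force
  have "s \<ge> (cmod (w i))^2" unfolding s_def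
    by (rule member_le_sum) (use i in auto)
  moreover have "(cmod (w i))^2 > 0" using i by simp
  ultimately have s0: "s > 0" by linarith
  have "a = complex_of_real (R / (2 * s))"
  proof -
    have "a * complex_of_real (2 * s) = complex_of_real R" using aS QR Ss by (metis mult.assoc mult.commute of_real_mult of_real_numeral)
    then show ?thesis using s0 by (simp add: field_simps)
  qed
  then show ?thesis using R0 s0 by (intro exI[of _ "R / (2 * s)"]) auto
qed
lemma map_prod_lin: "map_poly complex_of_real (\<Prod>b\<leftarrow>bs. [:-b,1:]) = (\<Prod>b\<leftarrow>bs. [:-complex_of_real b,1:])"
proof (induction bs)
  case (Cons a bs)
  interpret m: map_poly_comm_ring_hom "complex_of_real" ..
  have "map_poly complex_of_real (\<Prod>b\<leftarrow>a#bs. [:-b,1:]) =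
     map_poly complex_of_real [:-a,1:] * map_poly complex_of_real (\<Prod>b\<leftarrow>bs. [:-b,1:])"
    by (simp only: prod_list.Cons list.map m.hom_mult)
  then show ?case using Cons by simp
qed simp

lemma real_factor:
  assumes sg: "simple_graph n E"
  shows "\<exists>bs. char_poly (kirchhoff n E) = (\<Prod>b\<leftarrow>bs. [:-b,1:]) \<and> length bs = n \<and> (\<forall>b\<in>set bs. b \<ge> 0)"
proof -
  let ?K = "kirchhoff n E"
  let ?Kc = "map_mat complex_of_real ?K"
  have cp: "char_poly ?Kc = map_poly of_real (char_poly ?K)"
    by (rule of_real_hom.char_poly_hom[OF kirchhoff_carrier])
  obtain as where as: "char_poly ?Kc = (\<Prod>a\<leftarrow>as. [:-a,1:])" "length as = n"
    using char_poly_factorized[of ?Kc n] by auto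
  have re: "\<exists>b\<ge>0. a = complex_of_real b" if a: "a \<in> set as" for a
  proof (rule ev_real_nonneg[OF sg])
    have "poly (char_poly ?Kc) a = 0" unfolding as(1) using a
      by (simp add: poly_prod_list prod_list_zero_iff)
    then show "eigenvalue ?Kc a" using eigenvalue_root_char_poly[of ?Kc n] by simp
  qed
  define bs where "bs = map Re as"
  have asbs: "as = map complex_of_real bs" unfolding bs_def
  proof -
    have "map (\<lambda>a. complex_of_real (Re a)) as = as" by (rule map_idI) (use re in force)
    then show "as = map complex_of_real (map Re as)" by (simp add: comp_def)
  qed
  have "map_poly complex_of_real (char_poly ?K) = map_poly complex_of_real (\<Prod>b\<leftarrow>bs. [:-b,1:])"
    unfolding map_prod_lin cp[symmetric] as(1) asbs by (simp add: comp_def)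
  then have "char_poly ?K = (\<Prod>b\<leftarrow>bs. [:-b,1:])"
  proof -
    interpret m: map_poly_inj_comm_ring_hom "complex_of_real" ..
    show ?thesis using `map_poly complex_of_real _ = _` by (simp only: m.eq_iff)
  qed
  moreover have "length bs = n" using as(2) by (simp add: bs_def)
  moreover have "\<forall>b\<in>set bs. b \<ge> 0" using re unfolding bs_def by force
  ultimately show ?thesis by blast
qed

lemma proots_lin: "proots (\<Prod>b\<leftarrow>bs. [:-b,1:]) = mset (bs :: real list)"
proof (induction bs)
  case (Cons a bs)
  have nz: "(\<Prod>b\<leftarrow>bs. [:-b,1:]) \<noteq> 0" by (auto simp: prod_list_zero_iff)
  have "proots (\<Prod>b\<leftarrow>a # bs. [:-b,1:]) = proots ([:-a,1:] * (\<Prod>b\<leftarrow>bs. [:-b,1:]))" by simp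
  also have "\<dots> = proots [:-a,1:] + proots (\<Prod>b\<leftarrow>bs. [:-b,1:])"
    by (rule proots_mult) (use nz in auto)
  finally show ?case using Cons by simp
qed simp

lemma prod_neg: "(\<Prod>b\<leftarrow>bs. (-b - 1)) = (-1)^length bs * (\<Prod>b\<leftarrow>bs. 1 + (b::real))"
  by (induction bs) (auto simp: algebra_simps)

lemma det_one_plus:
  assumes K: "(K :: real mat) \<in> carrier_mat n n" and cp: "char_poly K = (\<Prod>b\<leftarrow>bs. [:-b,1:])"
    and len: "length bs = n"
  shows "det (1\<^sub>m n + K) = (\<Prod>b\<leftarrow>bs. 1 + b)"
proof -
  have "poly (char_poly K) (-1) = det (- (char_matrix K (-1)))" by (rule char_poly_matrix[OF K])
  also have "- (char_matrix K (-1)) = (-1) \<cdot>\<^sub>m (1\<^sub>m n + K)"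
    using K by (intro eq_matI) (auto simp: char_matrix_def)
  also have "det \<dots> = (-1)^n * det (1\<^sub>m n + K)" using K by simp
  finally have "(-1)^n * det (1\<^sub>m n + K) = (\<Prod>b\<leftarrow>bs. (-b - 1))"
    unfolding cp by (simp add: poly_prod_list comp_def)
  then show ?thesis unfolding prod_neg len by simp
qed

definition mtrace :: "real mat \<Rightarrow> real" where
  "mtrace A = (\<Sum>i<dim_row A. A $$ (i,i))"

lemma trace_comm:
  assumes "A \<in> carrier_mat n n" "B \<in> carrier_mat n n"
  shows "mtrace (A * B) = mtrace (B * A)"
proof -
  have "mtrace (A * B) = (\<Sum>i<n. \<Sum>k<n. A $$ (i,k) * B $$ (k,i))"
    using assms unfolding mtrace_def
    by (auto simp: scalar_prod_def atLeast0LessThan intro!: sum.cong)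
  also have "\<dots> = (\<Sum>k<n. \<Sum>i<n. B $$ (k,i) * A $$ (i,k))"
    by (subst sum.swap) (simp add: mult.commute)
  also have "\<dots> = mtrace (B * A)"
    using assms unfolding mtrace_def
    by (auto simp: scalar_prod_def atLeast0LessThan intro!: sum.cong)
  finally show ?thesis .
qed

lemma trace_similar:
  assumes A: "A \<in> carrier_mat n n" and sim: "similar_mat_wit A B P Q"
  shows "mtrace A = mtrace B"
proof -
  from similar_mat_witD2[OF A sim] have B: "B \<in> carrier_mat n n" and P: "P \<in> carrier_mat n n"
    and Q: "Q \<in> carrier_mat n n" and QP: "Q * P = 1\<^sub>m n" and AB: "A = P * B * Q" by auto
  have "mtrace A = mtrace ((P * B) * Q)" using AB by simp
  also have "\<dots> = mtrace (Q * (P * B))" by (rule trace_comm[of _ n]) (use P B Q in auto)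
  also have "Q * (P * B) = (Q * P) * B" using P B Q by (simp add: assoc_mult_mat)
  also have "\<dots> = B" using QP B by simp
  finally show ?thesis .
qed

lemma trace_diag: "mtrace B = sum_list (diag_mat B)"
  unfolding mtrace_def diag_mat_def
  by (simp add: sum_list_distinct_conv_sum_set atLeast0LessThan)

lemma has_nonzero:
  assumes sg: "simple_graph n E" and he: "has_edge n E"
    and cp: "char_poly (kirchhoff n E) = (\<Prod>b\<leftarrow>bs. [:-b,1:])"
  shows "\<exists>b\<in>set bs. b \<noteq> 0"
proof (rule ccontr)
  assume "\<not> ?thesis"
  then have "\<forall>b\<in>set bs. b = 0" by simp
  then have z: "sum_list bs = 0" by (induction bs) auto
  obtain B P Q where sd: "schur_decomposition (kirchhoff n E) bs = (B,P,Q)" by (metis prod_cases3)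
  from schur_decomposition[OF kirchhoff_carrier cp sd]
  have "similar_mat_wit (kirchhoff n E) B P Q" "diag_mat B = bs" by auto
  then have t0: "mtrace (kirchhoff n E) = 0"
    using trace_similar[OF kirchhoff_carrier] trace_diag z by metis
  from he obtain i j where ij: "i < n" "j < n" "E i j" unfolding has_edge_def by blast
  have irr: "\<And>i. i < n \<Longrightarrow> \<not> E i i" using sg unfolding simple_graph_def by blast
  have "mtrace (kirchhoff n E) = (\<Sum>k<n. real (vdegree n E k))"
    unfolding mtrace_def by (auto simp: irr intro!: sum.cong)
  also have "\<dots> \<ge> real (vdegree n E i)"
    by (rule member_le_sum) (use ij in auto)
  finally have "real (vdegree n E i) \<le> 0" using t0 by simp
  moreover have "vdegree n E i > 0" unfolding vdegree_def
    by (rule card_gt_0_iff[THEN iffD2]) (use ij in auto)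
  ultimately show False by simp
qed

lemma prod_list_ge1: "(\<forall>x\<in>set xs. g x \<ge> (1::real)) \<Longrightarrow> prod_list (map g xs) \<ge> 1"
  by (induction xs) (auto intro: order_trans[OF _ mult_mono, of 1 "1::real" 1, simplified])

lemma prod_list_ge_member:
  assumes "\<forall>x\<in>set xs. g x \<ge> (1::real)" "y \<in> set xs"
  shows "prod_list (map g xs) \<ge> g y"
  using assms
proof (induction xs)
  case (Cons a xs)
  have P1: "prod_list (map g xs) \<ge> 1" using Cons.prems(1) by (intro prod_list_ge1) auto
  have ga: "g a \<ge> 1" using Cons.prems(1) by auto
  show ?case
  proof (cases "y = a")
    case True
    have "g a * 1 \<le> g a * prod_list (map g xs)" using P1 ga by (intro mult_left_mono) auto
    then show ?thesis using True by simp
  next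
    case False
    then have "y \<in> set xs" using Cons.prems(2) by simp
    then have "g y \<le> prod_list (map g xs)" using Cons by auto
    then have "1 * g y \<le> g a * prod_list (map g xs)" using ga
      by (intro mult_mono) (use Cons.prems \<open>y \<in> set xs\<close> in \<open>force+\<close>)
    then show ?thesis by simp
  qed
qed simp

lemma prod_list_div: "prod_list (map f xs) / prod_list (map g xs) = prod_list (map (\<lambda>x. f x / g x) xs :: real list)"
  by (induction xs) (auto simp: times_divide_times_eq[symmetric])

lemma key:
  assumes ne: "cs \<noteq> []" and pos: "\<forall>c\<in>set cs. c > (0::real)"
  shows "1 / ((\<Prod>c\<leftarrow>cs. 1 + c) / (\<Prod>c\<leftarrow>cs. c) - 1) \<le> Min (set cs)"
proof -
  define m where "m = Min (set cs)"
  have m: "m \<in> set cs" unfolding m_def using ne by simp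
  have m0: "m > 0" using m pos by auto
  have "(\<Prod>c\<leftarrow>cs. 1 + c) / (\<Prod>c\<leftarrow>cs. c) = (\<Prod>c\<leftarrow>cs. (1 + c) / c)"
    using prod_list_div[of "\<lambda>c. 1 + c" cs "\<lambda>c. c"] by simp
  also have "\<dots> \<ge> (1 + m) / m"
    by (rule prod_list_ge_member[OF _ m]) (use pos in \<open>auto simp: field_simps\<close>)
  finally have T: "(\<Prod>c\<leftarrow>cs. 1 + c) / (\<Prod>c\<leftarrow>cs. c) - 1 \<ge> 1 / m"
    using m0 by (simp add: field_simps)
  have "1 / ((\<Prod>c\<leftarrow>cs. 1 + c) / (\<Prod>c\<leftarrow>cs. c) - 1) \<le> 1 / (1 / m)"
  proof (rule divide_left_mono[OF T])
    have "0 < 1 / m" using m0 by simp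
    then have "0 < (\<Prod>c\<leftarrow>cs. 1 + c) / (\<Prod>c\<leftarrow>cs. c) - 1" using T by linarith
    then show "0 < ((\<Prod>c\<leftarrow>cs. 1 + c) / (\<Prod>c\<leftarrow>cs. c) - 1) * (1 / m)"
      using \<open>0 < 1 / m\<close> by (rule mult_pos_pos)
  qed simp
  then show ?thesis using m0 by (simp add: m_def)
qed

lemma prod_list_filter1:
  assumes "\<And>x. \<not> P x \<Longrightarrow> f x = (1::real)"
  shows "prod_list (map f xs) = prod_list (map f (filter P xs))"
  by (induction xs) (auto simp: assms)

theorem mainTheorem4:
  fixes n :: nat and E :: "nat \<Rightarrow> nat \<Rightarrow> bool"
  assumes "simple_graph n E" and "has_edge n E"
  shows "min_nonzero_eigenvalue (kirchhoff n E) \<ge> 1 / (tree_forest_ratio n E - 1)"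
proof -
  let ?K = "kirchhoff n E"
  obtain bs where cp: "char_poly ?K = (\<Prod>b\<leftarrow>bs. [:-b,1:])" and len: "length bs = n"
    and nn: "\<forall>b\<in>set bs. b \<ge> 0"
    using real_factor[OF assms(1)] by blast
  define cs where "cs = filter (\<lambda>x. x \<noteq> 0) bs"
  have pos: "\<forall>c\<in>set cs. c > 0" using nn unfolding cs_def by force
  have ne: "cs \<noteq> []" using has_nonzero[OF assms cp] unfolding cs_def by (simp add: filter_empty_conv)
  have pd: "pdet ?K = (\<Prod>c\<leftarrow>cs. c)"
    unfolding pdet_def eigenvalues_mset_def cp proots_lin cs_def
    by (simp add: prod_mset_prod_list flip: mset_filter)
  have dt: "det (1\<^sub>m n + ?K) = (\<Prod>c\<leftarrow>cs. 1 + c)"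
    unfolding det_one_plus[OF kirchhoff_carrier cp len] cs_def
    by (rule prod_list_filter1) simp
  have evs: "{x. eigenvalue ?K x \<and> x \<noteq> 0} = set cs"
    unfolding eigenvalue_root_char_poly[OF kirchhoff_carrier] cp cs_def
    by (auto simp: poly_prod_list prod_list_zero_iff)
  show ?thesis
    unfolding min_nonzero_eigenvalue_def tree_forest_ratio_def evs pd dt
    using key[OF ne pos] .
qed

end
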